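(* Let $w\in\mathbb{C}^L$ be real and nonnegative, $a$ a positive integer dividing $L$, $N=L/a$, $M$ a positive integer, and let $w_r$, $M_L$, $b_L$, $\phi_{m,n,r}$ be as in the context. For $s,t\in\mathbb{Z}_L$ and $n,r\in\mathbb{Z}_N$ define $\beta_{nr}(s,t)=w_r[t-na]\,w_r[t-na-s]$. Let $I$ be any admissible selection function for which $M[n,r]=M_{\mathrm{g}}$ for all $n,r$, for some $M_{\mathrm{g}}\in\{1,2,\dots,L\}$. If $$\text{for all }t\in\mathbb{Z}_L:\quad\sum_{n=0}^{N-1}\sum_{r=0}^{N-1}I[n,r]\Big(\beta_{nr}(0,t)-\sum_{k\neq0}\beta_{nr}(kM_{\mathrm{g}},t)\Big)>0,$$ where the inner sum runs over integers $k\neq 0$ with $k\in\{\lceil (t-(L-1))/M_{\mathrm{g}}\rceil,\dots,\lfloor t/M_{\mathrm{g}}\rfloor\}$ (with $t$ represented in $\{0,\dots,L-1\}$), then the superposition system $\mathscr{F}(I)$ is a frame for $\mathbb{C}^L$.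
   Context: Vectors in $\mathbb{C}^L$ are indexed by $t\in\mathbb{Z}_L$ (represented by $\{0,\dots,L-1\}$), with $\langle x,y\rangle=\sum_t x[t]\overline{y[t]}$. $\mathcal{T}_kw[t]=w[t-k]$ (indices mod $L$), $\mathcal{M}_\beta w[t]=w[t]e^{2\pi i\beta t/L}$. A finite family $\{\phi_j\}$ is a frame for $\mathbb{C}^L$ if there exist $0<A\le B<\infty$ with $A\|x\|^2\le\sum_j|\langle x,\phi_j\rangle|^2\le B\|x\|^2$ for all $x$. Superposition windows: $w_r=\sum_{n=0}^{r}\mathcal{T}_{na}w$ for $r\in\mathbb{Z}_N$ (identified with $\{0,\dots,N-1\}$). Let $M_L=\operatorname{lcm}(1,2,\dots,\max(L,M))$, $b_L=L/M_L$, and $\phi_{m,n,r}=\mathcal{M}_{mb_L}\mathcal{T}_{na}w_r$ for $m\in\mathbb{Z}_{M_L}$, $n,r\in\mathbb{Z}_N$. An ordered partition function is a map $\widetilde I:\mathbb{Z}_N\times\mathbb{Z}_N\to\{0,1\}$, not identically zero, such that (i) if $\widetilde I[n,r]=1$ then $\widetilde I[n,r']=0$ for all $r'\neq r$; (ii) if $\widetilde I[n,r]=1$ then $\widetilde I[n',r']=0$ for all $n'\in\{n+1,\dots,n+r\}$ (mod $N$) and all $r'$; (iii) if $\widetilde I[n,r]=1$ then $\widetilde I[n+r+1,r']=1$ for exactly one $r'\in\mathbb{Z}_N$ (indices mod $N$). Given an ordered partition function $\widetilde I$ and a function $M[n,r]$ on $\mathbb{Z}_N\times\mathbb{Z}_N$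 with positive integer values dividing $M_L$, an admissible selection function is a map $I:\mathbb{Z}_{M_L}\times\mathbb{Z}_N\times\mathbb{Z}_N\to\{0,1\}$ with $I[0,n,r]=\widetilde I[n,r]$ for all $n,r$, and such that $I[0,n,r]=1$ implies $I[(M_L/M[n,r])m,n,r]=1$ for all $m\in\mathbb{Z}_{M[n,r]}$. One writes $I[n,r]$ for $I[0,n,r]$. The superposition system is $\mathscr{F}(I)=\{\phi_{m,n,r}: I[m,n,r]=1\}$. *)

theory Defs
  imports Complex_Main
begin

text \<open>Vectors in C^L are functions on nat; only the entries at 0..L-1 matter.
  Indices are read modulo L.\<close>

definition cidx :: "nat \<Rightarrow> (nat \<Rightarrow> 'a) \<Rightarrow> int \<Rightarrow> 'a" where
  "cidx L x j = x (nat (j mod int L))"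

definition transl :: "nat \<Rightarrow> int \<Rightarrow> (nat \<Rightarrow> 'a) \<Rightarrow> nat \<Rightarrow> 'a" where
  "transl L k x t = cidx L x (int t - k)"

definition modul :: "nat \<Rightarrow> real \<Rightarrow> (nat \<Rightarrow> complex) \<Rightarrow> nat \<Rightarrow> complex" where
  "modul L \<beta> x t = x t * cis (2 * pi * \<beta> * real t / real L)"

definition superpos_window :: "nat \<Rightarrow> nat \<Rightarrow> (nat \<Rightarrow> 'a::comm_monoid_add) \<Rightarrow> nat \<Rightarrow> nat \<Rightarrow> 'a" where
  "superpos_window L a w r = (\<lambda>t. \<Sum>n\<in>{0..r}. transl L (int (n * a)) w t)"

definition lcmML :: "nat \<Rightarrow> nat \<Rightarrow> nat" where
  "lcmML L M = Lcm {1..max L M}"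

definition bL :: "nat \<Rightarrow> nat \<Rightarrow> real" where
  "bL L M = real L / real (lcmML L M)"

definition phi :: "nat \<Rightarrow> nat \<Rightarrow> nat \<Rightarrow> (nat \<Rightarrow> complex) \<Rightarrow> nat \<Rightarrow> nat \<Rightarrow> nat \<Rightarrow> nat \<Rightarrow> complex" where
  "phi L a M w m n r = modul L (real m * bL L M) (transl L (int (n * a)) (superpos_window L a w r))"

definition inner_L :: "nat \<Rightarrow> (nat \<Rightarrow> complex) \<Rightarrow> (nat \<Rightarrow> complex) \<Rightarrow> complex" where
  "inner_L L x y = (\<Sum>t<L. x t * cnj (y t))"

definition norm2_L :: "nat \<Rightarrow> (nat \<Rightarrow> complex) \<Rightarrow> real" where
  "norm2_L L x = (\<Sum>t<L. (cmod (x t))\<^sup>2)"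

definition is_frame :: "nat \<Rightarrow> 'j set \<Rightarrow> ('j \<Rightarrow> nat \<Rightarrow> complex) \<Rightarrow> bool" where
  "is_frame L J \<phi> \<longleftrightarrow> finite J \<and>
     (\<exists>A B. 0 < A \<and> A \<le> B \<and>
        (\<forall>x. A * norm2_L L x \<le> (\<Sum>j\<in>J. (cmod (inner_L L x (\<phi> j)))\<^sup>2) \<and>
             (\<Sum>j\<in>J. (cmod (inner_L L x (\<phi> j)))\<^sup>2) \<le> B * norm2_L L x))"

definition ordered_partition :: "nat \<Rightarrow> (nat \<Rightarrow> nat \<Rightarrow> bool) \<Rightarrow> bool" where
  "ordered_partition N It \<longleftrightarrow>
     (\<exists>n<N. \<exists>r<N. It n r) \<and>
     (\<forall>n<N. \<forall>r<N. It n r \<longrightarrow> (\<forall>r'<N. r' \<noteq> r \<longrightarrow> \<not> It n r')) \<and>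
     (\<forall>n<N. \<forall>r<N. It n r \<longrightarrow> (\<forall>j\<in>{1..r}. \<forall>r'<N. \<not> It ((n + j) mod N) r')) \<and>
     (\<forall>n<N. \<forall>r<N. It n r \<longrightarrow> (\<exists>!r'. r' < N \<and> It ((n + r + 1) mod N) r'))"

definition admissible_sel :: "nat \<Rightarrow> nat \<Rightarrow> (nat \<Rightarrow> nat \<Rightarrow> nat) \<Rightarrow> (nat \<Rightarrow> nat \<Rightarrow> bool)
     \<Rightarrow> (nat \<Rightarrow> nat \<Rightarrow> nat \<Rightarrow> bool) \<Rightarrow> bool" where
  "admissible_sel MLv N Mf It I \<longleftrightarrow>
     (\<forall>n<N. \<forall>r<N. 0 < Mf n r \<and> Mf n r dvd MLv) \<and>
     (\<forall>n<N. \<forall>r<N. I 0 n r = It n r) \<and>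
     (\<forall>n<N. \<forall>r<N. I 0 n r \<longrightarrow> (\<forall>m<Mf n r. I ((MLv div Mf n r) * m) n r))"

definition beta :: "nat \<Rightarrow> nat \<Rightarrow> (nat \<Rightarrow> real) \<Rightarrow> nat \<Rightarrow> nat \<Rightarrow> int \<Rightarrow> nat \<Rightarrow> real" where
  "beta L a w n r s t =
     cidx L (superpos_window L a w r) (int t - int (n * a)) *
     cidx L (superpos_window L a w r) (int t - int (n * a) - s)"

end

theory Submission
  imports Defs "HOL-Library.Real_Mod" "HOL-Analysis.Convex"
begin


lemma roots_sum:
  fixes Mg :: nat and d :: int
  assumes "0 < Mg"
  shows "(\<Sum>m<Mg. cis (2 * pi * real m * real_of_int d / real Mg)) = (if int Mg dvd d then of_nat Mg else 0)"
proof -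
  define x where "x = cis (2 * pi * real_of_int d / real Mg)"
  have e: "cis (2 * pi * real m * real_of_int d / real Mg) = x ^ m" for m
    unfolding x_def DeMoivre by (simp add: field_simps)
  have xM: "x ^ Mg = 1" using assms unfolding x_def DeMoivre
    by (simp add: field_simps) (metis cis_multiple_2pi Ints_of_int mult.commute mult.left_commute)
  have x1: "x = 1 \<longleftrightarrow> int Mg dvd d"
  proof
    assume "x = 1"
    then obtain n where "2 * pi * real_of_int d / real Mg = of_int n * (2 * pi)"
      unfolding x_def cis_eq_1_iff by blast
    then have "real_of_int d = of_int n * real Mg" using assms by (simp add: field_simps)
    then have "d = n * int Mg" by (metis of_int_eq_iff of_int_mult of_int_of_nat_eq)
    then show "int Mg dvd d" by simp
  next
    assume "int Mg dvd d"
    then obtain n where "d = int Mg * n" by blast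
    then have "2 * pi * real_of_int d / real Mg = of_int n * (2 * pi)" using assms by simp
    then show "x = 1" unfolding x_def cis_eq_1_iff by blast
  qed
  show ?thesis unfolding e sum_gp_strict using xM x1 by simp
qed


lemma parseval:
  fixes Mg L :: nat and f :: "nat \<Rightarrow> complex"
  assumes "0 < Mg"
  shows "complex_of_real (\<Sum>m<Mg. (cmod (\<Sum>t<L. f t * cis (-(2 * pi * real m * real t / real Mg))))\<^sup>2)
     = of_nat Mg * (\<Sum>t<L. \<Sum>s<L. if int Mg dvd (int t - int s) then f t * cnj (f s) else 0)"
proof -
  have "complex_of_real (\<Sum>m<Mg. (cmod (\<Sum>t<L. f t * cis (-(2 * pi * real m * real t / real Mg))))\<^sup>2)
      = (\<Sum>m<Mg. (\<Sum>t<L. f t * cis (-(2 * pi * real m * real t / real Mg))) * cnj (\<Sum>t<L. f t * cis (-(2 * pi * real m * real t / real Mg))))"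
    unfolding of_real_sum complex_norm_square ..
  also have "\<dots> = (\<Sum>m<Mg. \<Sum>t<L. \<Sum>s<L. f t * cnj (f s) * cis (2 * pi * real m * real_of_int (int s - int t) / real Mg))"
    apply (simp only: cnj_sum sum_product)
    apply (intro sum.cong refl)
    apply (simp add: mult_ac cis_cnj cis_mult)
    apply (intro disjI2 arg_cong[where f=cis])
    apply (simp add: field_simps)
    done
  also have "\<dots> = (\<Sum>t<L. \<Sum>s<L. f t * cnj (f s) * (\<Sum>m<Mg. cis (2 * pi * real m * real_of_int (int s - int t) / real Mg)))"
    by (simp add: sum_distrib_left sum.swap[of _ "{..<Mg}"])
  also have "\<dots> = of_nat Mg * (\<Sum>t<L. \<Sum>s<L. if int Mg dvd (int t - int s) then f t * cnj (f s) else 0)"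
    unfolding roots_sum[OF assms] sum_distrib_left
    apply (intro sum.cong refl)
    apply (auto simp: dvd_diff_commute)
    done
  finally show ?thesis .
qed


lemma re_bound: "- ((cmod a)\<^sup>2 + (cmod b)\<^sup>2) / 2 \<le> Re (a * cnj b)"
proof -
  have "\<bar>Re (a * cnj b)\<bar> \<le> cmod (a * cnj b)" by (rule abs_Re_le_cmod)
  also have "\<dots> = cmod a * cmod b" by (simp add: norm_mult)
  also have "\<dots> \<le> ((cmod a)\<^sup>2 + (cmod b)\<^sup>2) / 2"
    using sum_squares_bound[of "cmod a" "cmod b"] by (simp add: power2_eq_square) 
  finally show ?thesis by linarith
qed

lemma diag_dom:
  fixes x :: "nat \<Rightarrow> complex" and C :: "nat \<Rightarrow> nat \<Rightarrow> real" and P :: "nat \<Rightarrow> nat \<Rightarrow> bool"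
  assumes sym: "\<And>t s. C t s = C s t" and Psym: "\<And>t s. P t s = P s t" and Prefl: "\<And>t. P t t"
    and Cnn: "\<And>t s. 0 \<le> C t s"
  shows "(\<Sum>t<L. (cmod (x t))\<^sup>2 * (C t t - (\<Sum>s<L. if P t s \<and> s \<noteq> t then C t s else 0)))
     \<le> Re (\<Sum>t<L. \<Sum>s<L. if P t s then x t * cnj (x s) * C t s else 0)"
proof -
  define a where "a t = (cmod (x t))\<^sup>2" for t
  define Q where "Q t s = (P t s \<and> s \<noteq> t)" for t s
  have Qsym: "Q t s = Q s t" for t s unfolding Q_def using Psym by auto
  have pt: "(if t = s then a t * C t t else 0) - (if Q t s then (a t + a s) / 2 * C t s else 0)
      \<le> (if P t s then Re (x t * cnj (x s)) * C t s else 0)" for t s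
  proof (cases "t = s")
    case True then show ?thesis using Prefl by (simp add: Q_def a_def complex_norm_square[symmetric] del: of_real_power)
  next
    case False
    have "- ((a t + a s) / 2) * C t s \<le> Re (x t * cnj (x s)) * C t s"
      using mult_right_mono[OF re_bound[of "x t" "x s"] Cnn[of t s]] unfolding a_def by (simp add: field_simps)
    then show ?thesis using False by (auto simp: Q_def)
  qed
  have "Re (\<Sum>t<L. \<Sum>s<L. if P t s then x t * cnj (x s) * C t s else 0)
      = (\<Sum>t<L. \<Sum>s<L. if P t s then Re (x t * cnj (x s)) * C t s else 0)"
    by (simp add: Re_sum if_distrib cong: if_cong)
  also have "\<dots> \<ge> (\<Sum>t<L. \<Sum>s<L. (if t = s then a t * C t t else 0) - (if Q t s then (a t + a s) / 2 * C t s else 0))"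
    by (intro sum_mono pt)
  finally have 1: "(\<Sum>t<L. \<Sum>s<L. (if t = s then a t * C t t else 0) - (if Q t s then (a t + a s) / 2 * C t s else 0))
      \<le> Re (\<Sum>t<L. \<Sum>s<L. if P t s then x t * cnj (x s) * C t s else 0)" .
  have 2: "(\<Sum>t<L. \<Sum>s<L. if Q t s then a s * C t s else 0) = (\<Sum>t<L. \<Sum>s<L. if Q t s then a t * C t s else 0)"
    by (subst sum.swap) (intro sum.cong refl, metis Qsym sym)
  have 3: "(\<Sum>t<L. \<Sum>s<L. if Q t s then (a t + a s) / 2 * C t s else 0)
      = (\<Sum>t<L. \<Sum>s<L. if Q t s then a t * C t s else 0) / 2 + (\<Sum>t<L. \<Sum>s<L. if Q t s then a s * C t s else 0) / 2"
    unfolding sum_divide_distrib sum.distrib[symmetric] by (intro sum.cong refl) (simp add: field_simps)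
  have 4: "(\<Sum>t<L. \<Sum>s<L. (if t = s then a t * C t t else 0) - (if Q t s then (a t + a s) / 2 * C t s else 0))
     = (\<Sum>t<L. a t * C t t) - (\<Sum>t<L. \<Sum>s<L. if Q t s then a t * C t s else 0)"
    unfolding sum_subtractf 3 2 by (simp add: sum.delta)
  have 5: "(\<Sum>t<L. (cmod (x t))\<^sup>2 * (C t t - (\<Sum>s<L. if P t s \<and> s \<noteq> t then C t s else 0)))
     = (\<Sum>t<L. a t * C t t) - (\<Sum>t<L. \<Sum>s<L. if Q t s then a t * C t s else 0)"
    by (simp add: a_def Q_def right_diff_distrib sum_subtractf sum_distrib_left if_distrib cong: if_cong)
  show ?thesis using 1 4 5 by simp
qed


lemma inner_bound: "(cmod (inner_L L x y))\<^sup>2 \<le> norm2_L L x * norm2_L L y"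
proof -
  have "cmod (inner_L L x y) \<le> (\<Sum>t<L. cmod (x t) * cmod (y t))"
    unfolding inner_L_def by (rule order_trans[OF norm_sum]) (simp add: norm_mult)
  then have "(cmod (inner_L L x y))\<^sup>2 \<le> (\<Sum>t<L. cmod (x t) * cmod (y t))\<^sup>2"
    by (simp add: power_mono)
  also have "\<dots> \<le> norm2_L L x * norm2_L L y"
    unfolding norm2_L_def by (rule Cauchy_Schwarz_ineq_sum)
  finally show ?thesis .
qed

lemma norm2_nonneg: "0 \<le> norm2_L L x" unfolding norm2_L_def by (simp add: sum_nonneg)

lemma frame_from_lower:
  assumes "finite J" and "0 < A" and "\<And>x. A * norm2_L L x \<le> (\<Sum>j\<in>J. (cmod (inner_L L x (\<phi> j)))\<^sup>2)"
  shows "is_frame L J \<phi>"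
proof -
  define B where "B = max A (\<Sum>j\<in>J. norm2_L L (\<phi> j))"
  have "(\<Sum>j\<in>J. (cmod (inner_L L x (\<phi> j)))\<^sup>2) \<le> B * norm2_L L x" for x
  proof -
    have "(\<Sum>j\<in>J. (cmod (inner_L L x (\<phi> j)))\<^sup>2) \<le> (\<Sum>j\<in>J. norm2_L L x * norm2_L L (\<phi> j))"
      by (intro sum_mono inner_bound)
    also have "\<dots> = (\<Sum>j\<in>J. norm2_L L (\<phi> j)) * norm2_L L x" by (simp add: sum_distrib_left mult.commute)
    also have "\<dots> \<le> B * norm2_L L x" unfolding B_def by (intro mult_right_mono norm2_nonneg) auto
    finally show ?thesis .
  qed
  then show ?thesis unfolding is_frame_def using assms B_def by (intro conjI exI[of _ A] exI[of _ B]) auto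
qed


lemma sw_complex: "superpos_window L a (\<lambda>t. complex_of_real (w t)) r t = complex_of_real (superpos_window L a w r t)"
  unfolding superpos_window_def transl_def cidx_def by simp

lemma sw_nonneg: fixes w :: "nat \<Rightarrow> real" assumes "0 < L" "\<forall>t<L. 0 \<le> w t" shows "0 \<le> superpos_window L a w r t"
proof -
  have nn: "0 \<le> w (nat (j mod int L))" for j
  proof -
    have "nat (j mod int L) < L" using assms(1) by (simp add: nat_less_iff)
    then show ?thesis using assms(2) by blast
  qed
  then show ?thesis unfolding superpos_window_def transl_def cidx_def by (rule sum_nonneg)
qed

lemma cidx_nonneg: fixes f :: "nat \<Rightarrow> real" assumes "0 < L" "\<And>t. t < L \<Longrightarrow> 0 \<le> f t" shows "0 \<le> cidx L f j"
  unfolding cidx_def using assms by (simp add: nat_less_iff)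

lemma sum_filter2: fixes N :: nat shows "(\<Sum>n<N. \<Sum>r<N. if P n r then f n r else 0) = (\<Sum>p\<in>{p\<in>{..<N}\<times>{..<N}. P (fst p) (snd p)}. f (fst p) (snd p))"
proof -
  have "(\<Sum>n<N. \<Sum>r<N. if P n r then f n r else 0) = (\<Sum>p\<in>{..<N}\<times>{..<N}. if P (fst p) (snd p) then f (fst p) (snd p) else 0)"
    by (simp add: sum.cartesian_product case_prod_beta)
  also have "\<dots> = (\<Sum>p\<in>{p\<in>{..<N}\<times>{..<N}. P (fst p) (snd p)}. f (fst p) (snd p))"
    by (rule sum.inter_filter[symmetric]) (intro finite_cartesian_product finite_lessThan)
  finally show ?thesis .
qed

lemma k_reindex:
  fixes Mg L t :: nat and g :: "int \<Rightarrow> real"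
  assumes "0 < Mg" "t < L"
  shows "(\<Sum>k\<in>{\<lceil>(real t - (real L - 1)) / real Mg\<rceil>..\<lfloor>real t / real Mg\<rfloor>} - {0}. g (int t - k * int Mg))
     = (\<Sum>s<L. if int Mg dvd (int t - int s) \<and> s \<noteq> t then g (int s) else 0)"
proof -
  have K: "k \<in> {\<lceil>(real t - (real L - 1)) / real Mg\<rceil>..\<lfloor>real t / real Mg\<rfloor>} \<longleftrightarrow>
      0 \<le> int t - k * int Mg \<and> int t - k * int Mg < int L" for k
  proof -
    have "\<lceil>(real t - (real L - 1)) / real Mg\<rceil> \<le> k \<longleftrightarrow> (real t - (real L - 1)) / real Mg \<le> of_int k"
      by (rule ceiling_le_iff)
    also have "\<dots> \<longleftrightarrow> real t - (real L - 1) \<le> of_int k * real Mg" using assms by (simp add: field_simps)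
    also have "\<dots> \<longleftrightarrow> int t - k * int Mg < int L"
    proof -
      have "real t - (real L - 1) \<le> of_int k * real Mg \<longleftrightarrow> of_int (int t - int L + 1) \<le> (of_int (k * int Mg) :: real)" by (simp add: algebra_simps)
      also have "\<dots> \<longleftrightarrow> int t - int L + 1 \<le> k * int Mg" by (rule of_int_le_iff)
      finally show ?thesis by linarith
    qed
    finally have 1: "\<lceil>(real t - (real L - 1)) / real Mg\<rceil> \<le> k \<longleftrightarrow> int t - k * int Mg < int L" .
    have "k \<le> \<lfloor>real t / real Mg\<rfloor> \<longleftrightarrow> of_int k \<le> real t / real Mg" by (rule le_floor_iff)
    also have "\<dots> \<longleftrightarrow> of_int k * real Mg \<le> real t" using assms by (simp add: field_simps)
    also have "\<dots> \<longleftrightarrow> of_int (k * int Mg) \<le> (of_int (int t) :: real)" by simp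
    also have "\<dots> \<longleftrightarrow> k * int Mg \<le> int t" by (rule of_int_le_iff)
    finally have 2: "k \<le> \<lfloor>real t / real Mg\<rfloor> \<longleftrightarrow> 0 \<le> int t - k * int Mg" by linarith
    show ?thesis using 1 2 by auto
  qed
  have "(\<Sum>k\<in>{\<lceil>(real t - (real L - 1)) / real Mg\<rceil>..\<lfloor>real t / real Mg\<rfloor>} - {0}. g (int t - k * int Mg))
     = (\<Sum>s\<in>{s. s < L \<and> int Mg dvd (int t - int s) \<and> s \<noteq> t}. g (int s))"
  proof (rule sum.reindex_bij_witness[where i="\<lambda>s. (int t - int s) div int Mg" and j="\<lambda>k. nat (int t - k * int Mg)"])
    fix k assume k: "k \<in> {\<lceil>(real t - (real L - 1)) / real Mg\<rceil>..\<lfloor>real t / real Mg\<rfloor>} - {0}"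
    then have k1: "0 \<le> int t - k * int Mg" "int t - k * int Mg < int L" "k \<noteq> 0" using K by auto
    show "(int t - int (nat (int t - k * int Mg))) div int Mg = k" using k1 assms by simp
    have "k * int Mg \<noteq> 0" using k1 assms by simp
    moreover have "int (nat (int t - k * int Mg)) = int t - k * int Mg" using k1(1) by simp
    ultimately have "nat (int t - k * int Mg) \<noteq> t" by linarith
    then show "nat (int t - k * int Mg) \<in> {s. s < L \<and> int Mg dvd (int t - int s) \<and> s \<noteq> t}"
      using k1 assms by (auto simp: nat_less_iff)
    show "g (int (nat (int t - k * int Mg))) = g (int t - k * int Mg)" using k1(1) by simp
  next
    fix s assume s: "s \<in> {s. s < L \<and> int Mg dvd (int t - int s) \<and> s \<noteq> t}"
    then obtain q where q: "int t - int s = int Mg * q" by auto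
    have qs: "(int t - int s) div int Mg = q" using q assms by simp
    show "nat (int t - (int t - int s) div int Mg * int Mg) = s" using q qs by (simp add: mult.commute)
    have "q \<noteq> 0" using q s by auto
    then show "(int t - int s) div int Mg \<in> {\<lceil>(real t - (real L - 1)) / real Mg\<rceil>..\<lfloor>real t / real Mg\<rfloor>} - {0}"
    proof -
      have "0 \<le> int t - q * int Mg" "int t - q * int Mg < int L" using q s by (auto simp: mult.commute)
      then have "q \<in> {\<lceil>(real t - (real L - 1)) / real Mg\<rceil>..\<lfloor>real t / real Mg\<rfloor>}" using K[of q] by blast
      then show ?thesis using qs \<open>q \<noteq> 0\<close> by simp
    qed
  qed
  also have "\<dots> = (\<Sum>s<L. if int Mg dvd (int t - int s) \<and> s \<noteq> t then g s else 0)"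
    by (simp add: sum.inter_filter[symmetric] lessThan_def conj_commute conj_left_commute)
  finally show ?thesis .
qed


theorem theorem1:
  fixes L a M Mg :: nat and w :: "nat \<Rightarrow> real"
    and It :: "nat \<Rightarrow> nat \<Rightarrow> bool" and I :: "nat \<Rightarrow> nat \<Rightarrow> nat \<Rightarrow> bool"
  assumes "0 < L" and "0 < a" and "a dvd L" and "0 < M"
    and "\<forall>t<L. 0 \<le> w t"
    and "Mg \<in> {1..L}"
    and "ordered_partition (L div a) It"
    and "admissible_sel (lcmML L M) (L div a) (\<lambda>n r. Mg) It I"
    and "\<forall>t<L. (\<Sum>n<L div a. \<Sum>r<L div a.
            (if I 0 n r then
               beta L a w n r 0 t
               - (\<Sum>k\<in>{\<lceil>(real t - (real L - 1)) / real Mg\<rceil>..\<lfloor>real t / real Mg\<rfloor>} - {0}.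
                    beta L a w n r (k * int Mg) t)
             else 0)) > 0"
  shows "is_frame L {(m, n, r). m < lcmML L M \<and> n < L div a \<and> r < L div a \<and> I m n r}
           (\<lambda>(m, n, r). phi L a M (\<lambda>t. complex_of_real (w t)) m n r)"
proof -
  define N where "N = L div a"
  define MLv where "MLv = lcmML L M"
  define S where "S = {p \<in> {..<N}\<times>{..<N}. I 0 (fst p) (snd p)}"
  define H where "H n r j = cidx L (superpos_window L a w r) (j - int (n * a))" for n r j
  define G where "G n r t = H n r (int t)" for n r t
  define C where "C t s = (\<Sum>p\<in>S. G (fst p) (snd p) t * G (fst p) (snd p) s)" for t s
  define P where "P t s = (int Mg dvd (int t - int s))" for t s
  define D where "D t = C t t - (\<Sum>s<L. if P t s \<and> s \<noteq> t then C t s else 0)" for t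
  define J where "J = {(m, n, r). m < MLv \<and> n < N \<and> r < N \<and> I m n r}"
  define \<Phi> where "\<Phi> = (\<lambda>(m, n, r). phi L a M (\<lambda>t. complex_of_real (w t)) m n r)"
  have N0: "0 < N" using assms(1-3) dvd_imp_le[of a L] by (simp add: N_def div_greater_zero_iff)
  have Mg0: "0 < Mg" using assms(6) by simp
  have "Lcm {1..max L M} \<noteq> (0::nat)" by (subst Lcm_0_iff) auto
  then have MLv0: "0 < MLv" unfolding MLv_def lcmML_def by linarith
  have Mgdvd: "Mg dvd MLv" using assms(8) N0 unfolding admissible_sel_def MLv_def N_def by blast
  have Isel: "\<And>n r m. n < N \<Longrightarrow> r < N \<Longrightarrow> I 0 n r \<Longrightarrow> m < Mg \<Longrightarrow> I ((MLv div Mg) * m) n r"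
    using assms(8) unfolding admissible_sel_def MLv_def N_def by blast
  have finS: "finite S" unfolding S_def by simp
  have Gnn: "0 \<le> G n r t" for n r t
    unfolding G_def H_def by (rule cidx_nonneg[OF assms(1)]) (rule sw_nonneg[OF assms(1,5)])
  have Csym: "C t s = C s t" for t s by (simp add: C_def mult.commute)
  have Cnn: "0 \<le> C t s" for t s by (simp add: C_def sum_nonneg Gnn)
  have Dpos: "0 < D t" if t: "t < L" for t
  proof -
    let ?K = "{\<lceil>(real t - (real L - 1)) / real Mg\<rceil>..\<lfloor>real t / real Mg\<rfloor>} - {0}"
    have b0: "beta L a w n r 0 t = G n r t * G n r t" for n r
      by (simp add: beta_def G_def H_def)
    have bk: "beta L a w n r (k * int Mg) t = G n r t * H n r (int t - k * int Mg)" for n r k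
      by (simp add: beta_def G_def H_def algebra_simps)
    have "0 < (\<Sum>n<N. \<Sum>r<N. (if I 0 n r then
               beta L a w n r 0 t - (\<Sum>k\<in>?K. beta L a w n r (k * int Mg) t) else 0))"
      using assms(9) t unfolding N_def by blast
    also have "\<dots> = (\<Sum>p\<in>S. G (fst p) (snd p) t * G (fst p) (snd p) t
          - (\<Sum>k\<in>?K. G (fst p) (snd p) t * H (fst p) (snd p) (int t - k * int Mg)))"
      unfolding sum_filter2 S_def b0 bk ..
    also have "\<dots> = C t t - (\<Sum>k\<in>?K. (\<lambda>j. \<Sum>p\<in>S. G (fst p) (snd p) t * H (fst p) (snd p) j) (int t - k * int Mg))"
      unfolding sum_subtractf C_def by (simp add: sum.swap[of _ S])
    also have "\<dots> = D t"
      using k_reindex[OF Mg0 t, of "\<lambda>j. \<Sum>p\<in>S. G (fst p) (snd p) t * H (fst p) (snd p) j"]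
      unfolding D_def P_def C_def G_def by simp
    finally show ?thesis .
  qed
  define A0 where "A0 = Min (D ` {..<L})"
  have A0pos: "0 < A0" unfolding A0_def using Dpos assms(1) by (subst Min_gr_iff) auto
  have A0le: "A0 \<le> D t" if "t < L" for t unfolding A0_def using that by auto
  show ?thesis
    unfolding MLv_def[symmetric] N_def[symmetric] J_def[symmetric] \<Phi>_def[symmetric]
  proof (rule frame_from_lower)
    show "finite J" unfolding J_def
      by (rule finite_subset[of _ "{..<MLv} \<times> {..<N} \<times> {..<N}"]) auto
    show "0 < real Mg * A0" using Mg0 A0pos by simp
    fix x :: "nat \<Rightarrow> complex"
    show "real Mg * A0 * norm2_L L x \<le> (\<Sum>j\<in>J. (cmod (inner_L L x (\<Phi> j)))\<^sup>2)"
    proof -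
      define MM where "MM = MLv div Mg"
      have MM0: "0 < MM" unfolding MM_def using Mgdvd MLv0 Mg0 by (auto elim!: dvdE)
      have MMMg: "MM * Mg = MLv" unfolding MM_def using Mgdvd by simp
      define J' where "J' = (\<lambda>(p, m). (MM * m, fst p, snd p)) ` (S \<times> {..<Mg})"
      define F where "F j = (cmod (inner_L L x (\<Phi> j)))\<^sup>2" for j
      have J'J: "J' \<subseteq> J"
      proof
        fix j assume "j \<in> J'"
        then obtain n r m where nr: "(n, r) \<in> S" "m < Mg" "j = (MM * m, n, r)" unfolding J'_def by auto
        have "MM * m < MM * Mg" using nr(2) MM0 by simp
        then show "j \<in> J" using Isel[of n r m] nr MMMg unfolding J_def S_def MM_def by auto
      qed
      have inj: "inj_on (\<lambda>(p, m). (MM * m, fst p, snd p)) (S \<times> {..<Mg})"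
        using MM0 by (auto simp: inj_on_def prod_eq_iff)
      have finJ: "finite J" unfolding J_def
        by (rule finite_subset[of _ "{..<MLv} \<times> {..<N} \<times> {..<N}"]) auto
      have step1: "(\<Sum>j\<in>J'. F j) \<le> (\<Sum>j\<in>J. F j)"
        by (rule sum_mono2[OF finJ J'J]) (simp add: F_def)
      have step2: "(\<Sum>j\<in>J'. F j) = (\<Sum>p\<in>S. \<Sum>m<Mg. F (MM * m, fst p, snd p))"
        unfolding J'_def sum.reindex[OF inj] sum.cartesian_product by (simp add: case_prod_beta)
      have phi_eq: "\<Phi> (MM * m, n, r) t = complex_of_real (G n r t) * cis (2 * pi * real m * real t / real Mg)" for m n r t
      proof -
        have "real (MM * m) * bL L M = real m * real L / real Mg"
          unfolding bL_def MLv_def[symmetric] using MMMg[symmetric] Mg0 MLv0 by (simp add: field_simps)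
        then have "2 * pi * (real (MM * m) * bL L M) * real t / real L = 2 * pi * real m * real t / real Mg"
          using assms(1) by (simp add: field_simps)
        then show ?thesis
          unfolding \<Phi>_def phi_def modul_def by (simp add: transl_def cidx_def sw_complex G_def H_def)
      qed
      have inner_eq: "inner_L L x (\<Phi> (MM * m, n, r)) = (\<Sum>t<L. (x t * complex_of_real (G n r t)) * cis (-(2 * pi * real m * real t / real Mg)))" for m n r
        unfolding inner_L_def phi_eq by (simp add: cis_cnj mult_ac)
      have step3: "(\<Sum>m<Mg. F (MM * m, n, r)) = real Mg * Re (\<Sum>t<L. \<Sum>s<L. if P t s then x t * cnj (x s) * complex_of_real (G n r t * G n r s) else 0)" for n r
      proof -
        have "complex_of_real (\<Sum>m<Mg. F (MM * m, n, r)) = of_nat Mg * (\<Sum>t<L. \<Sum>s<L. if P t s then x t * complex_of_real (G n r t) * cnj (x s * complex_of_real (G n r s)) else 0)"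
          unfolding F_def inner_eq P_def by (rule parseval[OF Mg0])
        also have "\<dots> = of_nat Mg * (\<Sum>t<L. \<Sum>s<L. if P t s then x t * cnj (x s) * complex_of_real (G n r t * G n r s) else 0)"
          by (intro arg_cong[where f="\<lambda>z. of_nat Mg * z"] sum.cong refl) (simp add: mult_ac)
        finally have e: "complex_of_real (\<Sum>m<Mg. F (MM * m, n, r)) = of_nat Mg * (\<Sum>t<L. \<Sum>s<L. if P t s then x t * cnj (x s) * complex_of_real (G n r t * G n r s) else 0)" .
        have "Re (complex_of_real (\<Sum>m<Mg. F (MM * m, n, r))) = Re (of_nat Mg * (\<Sum>t<L. \<Sum>s<L. if P t s then x t * cnj (x s) * complex_of_real (G n r t * G n r s) else 0))"
          by (subst e) (rule refl)
        then show ?thesis by simp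
      qed
      have step4: "(\<Sum>p\<in>S. Re (\<Sum>t<L. \<Sum>s<L. if P t s then x t * cnj (x s) * complex_of_real (G (fst p) (snd p) t * G (fst p) (snd p) s) else 0))
          = Re (\<Sum>t<L. \<Sum>s<L. if P t s then x t * cnj (x s) * complex_of_real (C t s) else 0)"
      proof -
        have "(\<Sum>p\<in>S. \<Sum>t<L. \<Sum>s<L. if P t s then x t * cnj (x s) * complex_of_real (G (fst p) (snd p) t * G (fst p) (snd p) s) else 0)
            = (\<Sum>t<L. \<Sum>s<L. \<Sum>p\<in>S. if P t s then x t * cnj (x s) * complex_of_real (G (fst p) (snd p) t * G (fst p) (snd p) s) else 0)"
          apply (rule trans[OF sum.swap])
          apply (intro sum.cong refl)
          apply (rule sum.swap)
          done
        also have "\<dots> = (\<Sum>t<L. \<Sum>s<L. if P t s then x t * cnj (x s) * complex_of_real (C t s) else 0)"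
          apply (intro sum.cong refl)
          subgoal for t s by (cases "P t s") (simp_all add: C_def of_real_sum sum_distrib_left)
          done
        finally have e: "(\<Sum>p\<in>S. \<Sum>t<L. \<Sum>s<L. if P t s then x t * cnj (x s) * complex_of_real (G (fst p) (snd p) t * G (fst p) (snd p) s) else 0)
            = (\<Sum>t<L. \<Sum>s<L. if P t s then x t * cnj (x s) * complex_of_real (C t s) else 0)" .
        show ?thesis unfolding Re_sum[symmetric] e ..
      qed
      have step5: "(\<Sum>t<L. (cmod (x t))\<^sup>2 * D t) \<le> Re (\<Sum>t<L. \<Sum>s<L. if P t s then x t * cnj (x s) * complex_of_real (C t s) else 0)"
        unfolding D_def by (rule diag_dom[OF Csym _ _ Cnn]) (auto simp: P_def dvd_diff_commute)
      have step6: "A0 * norm2_L L x \<le> (\<Sum>t<L. (cmod (x t))\<^sup>2 * D t)"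
        unfolding norm2_L_def sum_distrib_left
        by (intro sum_mono) (simp add: A0le mult.commute mult_right_mono)
      have "real Mg * A0 * norm2_L L x \<le> real Mg * Re (\<Sum>t<L. \<Sum>s<L. if P t s then x t * cnj (x s) * complex_of_real (C t s) else 0)"
        using mult_left_mono[OF order_trans[OF step6 step5], of "real Mg"] by (simp add: mult.assoc)
      also have "\<dots> = (\<Sum>j\<in>J'. F j)"
        unfolding step2 step3 sum_distrib_left[symmetric] step4 ..
      also have "\<dots> \<le> (\<Sum>j\<in>J. F j)" by (rule step1)
      finally show ?thesis unfolding F_def .
    qed
  qed
qed
end
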